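(* Let $q$ be a prime power with $q\equiv 3\pmod 8$, and let $f(x)=x^2\left(x^{(q-1)/2}+3\right)$ or $f(x)=x^2\left(x^{(q-1)/2}-3\right)$ in $\mathbb{F}_q[x]$. Then $f$ is a permutation polynomial of $\mathbb{F}_q$ and $\delta_f\le 4$.
   Context: A polynomial $f\in\mathbb{F}_q[x]$ is a permutation polynomial of $\mathbb{F}_q$ if $c\mapsto f(c)$ is a bijection of $\mathbb{F}_q$. For $a\in\mathbb{F}_q^*$, $\Delta_{f,a}(x)=f(x+a)-f(x)$, and the differential uniformity is $\delta_f=\max_{a\in\mathbb{F}_q^*,\,c\in\mathbb{F}_q}|\{x\in\mathbb{F}_q:\Delta_{f,a}(x)=c\}|$. *)

theory Defs
  imports "HOL-Computational_Algebra.Polynomial" "HOL-Library.Cardinality"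
begin

text \<open>Finite field F_q is modelled as a type 'a of class {finite, field}, q = CARD('a).\<close>

definition permutation_poly :: "'a::{finite,field} poly \<Rightarrow> bool" where
  "permutation_poly f \<longleftrightarrow> bij (poly f)"

definition diff_uniformity :: "'a::{finite,field} poly \<Rightarrow> nat" where
  "diff_uniformity f =
     Max {card {x. poly f (x + a) - poly f x = c} | a c. a \<noteq> 0}"

end

theory Submission
  imports Defs
begin

definition chi :: "'a::{finite,field} \<Rightarrow> 'a" where
  "chi x = x ^ ((CARD('a) - 1) div 2)"

lemma fermat_ff:
  fixes x :: "'a::{finite,field}"
  assumes "x \<noteq> 0"
  shows "x ^ (CARD('a) - 1) = 1"
proof -
  let ?S = "UNIV - {0::'a}"
  have fin: "finite ?S" by simp
  have bij: "bij_betw (\<lambda>y. x * y) ?S ?S"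
    unfolding bij_betw_def inj_on_def
  proof (intro conjI ballI impI)
    show "(*) x ` ?S = ?S"
    proof
      show "(*) x ` ?S \<subseteq> ?S" using assms by auto
      show "?S \<subseteq> (*) x ` ?S"
      proof
        fix z assume "z \<in> ?S"
        hence "inverse x * z \<in> ?S" "z = x * (inverse x * z)" using assms by auto
        thus "z \<in> (*) x ` ?S" by blast
      qed
    qed
  qed (use assms in auto)
  have "prod (\<lambda>y. x * y) ?S = prod id ?S"
    using prod.reindex_bij_betw[OF bij, of id] by simp
  moreover have "prod (\<lambda>y. x * y) ?S = x ^ card ?S * prod id ?S"
    by (simp add: prod.distrib)
  moreover have "prod id ?S \<noteq> 0" by (simp add: prod_zero_iff)
  moreover have "card ?S = CARD('a) - 1" by (simp add: card_Diff_subset)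
  ultimately show ?thesis by (metis mult_cancel_right2)
qed

lemma involution_even:
  assumes "finite S" "\<And>x. x \<in> S \<Longrightarrow> g x \<in> S" "\<And>x. x \<in> S \<Longrightarrow> g (g x) = x"
    "\<And>x. x \<in> S \<Longrightarrow> g x \<noteq> x"
  shows "even (card S)"
  using assms
proof (induction "card S" arbitrary: S rule: less_induct)
  case less
  show ?case
  proof (cases "S = {}")
    case True thus ?thesis by simp
  next
    case False
    then obtain x where x: "x \<in> S" by blast
    let ?T = "S - {x, g x}"
    have gx: "g x \<in> S" "g x \<noteq> x" using less x by auto
    have cT: "card ?T = card S - 2" using less(2) x gx by (simp add: card_Diff_subset)
    have "card S \<ge> 2" using less(2) x gx
      by (metis card_2_iff card_mono empty_subsetI insert_subset)
    hence lt: "card ?T < card S" using cT by simp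
    have "even (card ?T)"
    proof (rule less(1)[OF lt])
      show "finite ?T" using less by simp
      fix y assume y: "y \<in> ?T"
      have "y \<in> S" "y \<noteq> x" "y \<noteq> g x" using y by auto
      hence "g y \<in> S" "g y \<noteq> x" "g y \<noteq> g x" using less(3,4) x by metis+
      thus "g y \<in> ?T" by simp
      show "g (g y) = y" using y less by auto
      show "g y \<noteq> y" using y less by auto
    qed
    thus ?thesis using cT \<open>card S \<ge> 2\<close> by auto
  qed
qed

lemma two_nz:
  assumes "CARD('a::{finite,field}) mod 8 = 3"
  shows "(2::'a) \<noteq> 0"
proof
  assume h: "(2::'a) = 0"
  have "even (card (UNIV::'a set))"
  proof (rule involution_even[where g="\<lambda>x. x + 1"])
    fix x :: 'a
    show "x + 1 + 1 = x" using h by (metis add.assoc one_add_one add_0_right)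
    show "x + 1 \<noteq> x" by simp
  qed auto
  thus False using assms by presburger
qed


lemma sq_fiber:
  fixes r :: "'a::field"
  shows "{x. x * x = r * r} = {r, -r}"
proof -
  have "x * x = r * r \<longleftrightarrow> x = r \<or> x = -r" for x
  proof -
    have "x * x - r * r = (x - r) * (x + r)" by (simp add: algebra_simps)
    thus ?thesis by (metis add_eq_0_iff2 eq_iff_diff_eq_0 mult_eq_0_iff)
  qed
  thus ?thesis by auto
qed

lemma sq_fiber_card:
  fixes r :: "'a::field"
  assumes "(2::'a) \<noteq> 0" "r \<noteq> 0"
  shows "card {x. x * x = r * r} = 2"
proof -
  have "r \<noteq> -r"
  proof
    assume h: "r = -r"
    have "2 * r = r + r" by (rule mult_2)
    also have "\<dots> = r + - r" by (rule arg_cong[where f="\<lambda>z. r + z"]) (rule h)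
    also have "\<dots> = 0" by (rule add.right_inverse)
    finally have "2 * r = 0" .
    thus False using assms by simp
  qed
  thus ?thesis by (simp add: sq_fiber)
qed

definition fs :: "'a::{finite,field} \<Rightarrow> 'a \<Rightarrow> 'a" where
  "fs s x = x * x * (chi x + s)"

lemma card_sq_shift: "card {t::'a::field. (t + k) * (t + k) = d} \<le> 2"
proof (cases "\<exists>r. r * r = d")
  case True
  then obtain r where r: "r * r = d" by blast
  have "{t. (t + k) * (t + k) = d} = (\<lambda>y. y - k) ` {y. y * y = r * r}"
  proof (intro equalityI subsetI)
    fix t assume "t \<in> {t. (t + k) * (t + k) = d}"
    hence "t + k \<in> {y. y * y = r * r}" using r by simp
    moreover have "t = (t + k) - k" by simp
    ultimately show "t \<in> (\<lambda>y. y - k) ` {y. y * y = r * r}" by blast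
  next
    fix t assume "t \<in> (\<lambda>y. y - k) ` {y. y * y = r * r}"
    then obtain y where "y * y = r * r" "t = y - k" by blast
    thus "t \<in> {t. (t + k) * (t + k) = d}" using r by simp
  qed
  also have "card \<dots> \<le> card {y. y * y = r * r}" by (rule card_image_le) (simp add: sq_fiber)
  also have "\<dots> \<le> 2" unfolding sq_fiber by (simp add: card_insert_le_m1)
  finally show ?thesis .
next
  case False
  hence "{t. (t + k) * (t + k) = d} = {}" by blast
  thus ?thesis by simp
qed

context
  fixes dummy :: "'a::{finite,field}"
  assumes q8: "CARD('a) mod 8 = 3"
begin

lemma m_props: "2 * ((CARD('a) - 1) div 2) = CARD('a) - 1" "odd ((CARD('a) - 1) div 2)"
  "(CARD('a) - 1) div 2 \<ge> 1"
  using q8 by presburger+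

lemma chi_0: "chi (0::'a) = 0"
  using m_props(3) by (simp add: chi_def)

lemma chi_mult: "chi ((x::'a) * y) = chi x * chi y"
  by (simp add: chi_def power_mult_distrib)

lemma chi_sq1: "(x::'a) \<noteq> 0 \<Longrightarrow> chi x * chi x = 1"
proof -
  assume x: "x \<noteq> 0"
  have "chi x * chi x = x ^ (2 * ((CARD('a) - 1) div 2))"
    unfolding chi_def by (simp only: mult_2 power_add)
  also have "\<dots> = 1" unfolding m_props(1) using fermat_ff[OF x] .
  finally show ?thesis .
qed

lemma chi_pm: "(x::'a) \<noteq> 0 \<Longrightarrow> chi x = 1 \<or> chi x = -1"
proof -
  assume "x \<noteq> 0"
  hence "chi x \<in> {y. y * y = 1 * 1}" using chi_sq1[of x] by simp
  thus ?thesis unfolding sq_fiber by simp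
qed

lemma chi_m1: "chi (-1::'a) = -1"
  using m_props(2) by (simp add: chi_def)

lemma chi_square: "(x::'a) \<noteq> 0 \<Longrightarrow> chi (x * x) = 1"
  by (simp add: chi_mult chi_sq1)

lemma one_ne_m1: "(1::'a) \<noteq> -1"
proof
  assume h: "(1::'a) = -1"
  have "(2::'a) = 1 + 1" by simp
  also have "\<dots> = 1 + (-1)" by (subst h[symmetric]) (rule refl)
  also have "\<dots> = 0" by simp
  finally show False using two_nz[OF q8] by simp
qed


lemma euler_conv:
  assumes "chi (u::'a) = 1"
  shows "\<exists>r. r \<noteq> 0 \<and> r * r = u"
proof -
  define m where "m = (CARD('a) - 1) div 2"
  let ?SQ = "(\<lambda>x::'a. x * x) ` (UNIV - {0})"
  have un: "UNIV - {0::'a} = (\<Union>v\<in>?SQ. {x. x * x = v})"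
  proof (intro equalityI subsetI)
    fix x :: 'a assume "x \<in> UNIV - {0}"
    thus "x \<in> (\<Union>v\<in>?SQ. {x. x * x = v})" by blast
  next
    fix x :: 'a assume "x \<in> (\<Union>v\<in>?SQ. {x. x * x = v})"
    then obtain y where "y \<noteq> 0" "x * x = y * y" by blast
    hence "x * x \<noteq> 0" by simp
    thus "x \<in> UNIV - {0}" by auto
  qed
  have "card (UNIV - {0::'a}) = card (\<Union>v\<in>?SQ. {x. x * x = v})"
    by (rule arg_cong[OF un])
  also have "\<dots> = (\<Sum>v\<in>?SQ. card {x. x * x = v})"
  proof (rule card_UN_disjoint)
    show "finite ?SQ" by (rule finite)
    show "\<forall>v\<in>?SQ. finite {x. x * x = v}" by (intro ballI finite)
    show "\<forall>v\<in>?SQ. \<forall>w\<in>?SQ. v \<noteq> w \<longrightarrow> {x. x * x = v} \<inter> {x. x * x = w} = {}"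
      by blast
  qed
  also have "\<dots> = (\<Sum>v\<in>?SQ. 2)"
  proof (rule sum.cong[OF refl])
    fix v assume "v \<in> ?SQ"
    then obtain y where y: "y \<noteq> 0" "v = y * y" by blast
    show "card {x. x * x = v} = 2" unfolding y(2) by (rule sq_fiber_card[OF two_nz[OF q8] y(1)])
  qed
  finally have "CARD('a) - 1 = 2 * card ?SQ" by (simp add: card_Diff_subset)
  hence cSQ: "card ?SQ = m" using m_props(1) unfolding m_def by simp
  define P :: "'a poly" where "P = monom 1 m - 1"
  have evP: "poly P x = x ^ m - 1" for x by (simp add: P_def poly_monom)
  have "P \<noteq> 0" proof assume "P = 0" hence "poly P 0 = 0" by simp
    thus False using m_props(3) by (simp add: evP m_def power_0_left) qed
  hence "card {x. poly P x = 0} \<le> degree P" by (rule card_poly_roots_bound)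
  also have "degree P \<le> m" unfolding P_def
    by (metis degree_diff_le degree_monom_le degree_1 le0)
  finally have c1: "card {x. poly P x = 0} \<le> m" .
  have sub: "?SQ \<subseteq> {x. poly P x = 0}"
    using chi_square unfolding evP chi_def m_def by auto
  have "?SQ = {x. poly P x = 0}"
    by (rule card_seteq) (use sub c1 cSQ in auto)
  moreover have "u \<in> {x. poly P x = 0}" using assms by (simp add: evP chi_def m_def)
  ultimately have "u \<in> ?SQ" by simp
  thus ?thesis by blast
qed


lemma canc: "(d::'b::field) \<noteq> 0 \<Longrightarrow> (c * d) / (d * d) = c / d"
  by simp

lemma canc2: "(d::'b::field) \<noteq> 0 \<Longrightarrow> c \<noteq> 0 \<Longrightarrow>
   (c * x / d) / (c / d) = x \<and> (c * (y / d)) / (c / d) = y"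
  by (simp add: field_simps)

lemma chi_1: "chi (1::'a) = 1" by (simp add: chi_def)

lemma den_nz: "1 + (t::'a) * t \<noteq> 0"
proof
  assume h: "1 + t * t = 0"
  hence tt: "t * t = -1" by (simp add: add_eq_0_iff)
  hence "t \<noteq> 0" by auto
  hence "chi (t * t) = 1" by (rule chi_square)
  hence "chi (-1::'a) = 1" unfolding tt .
  thus False using chi_m1 one_ne_m1 by simp
qed

lemma conic_card: "card {p::'a \<times> 'a. fst p * fst p + snd p * snd p = 1} = CARD('a) + 1"
proof -
  have two: "(2::'a) \<noteq> 0" by (rule two_nz[OF q8])
  define phi where "phi t = ((1 - t*t)/(1 + t*t), 2*t/(1 + t*t))" for t :: 'a
  let ?C = "{p::'a \<times> 'a. fst p * fst p + snd p * snd p = 1}"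
  have inC: "phi t \<in> ?C" for t
  proof -
    have d: "1 + t * t \<noteq> 0" by (rule den_nz)
    have "(1 - t*t) * (1 - t*t) + (2*t) * (2*t) = (1 + t*t) * (1 + t*t)" by (simp add: algebra_simps)
    moreover have "fst (phi t) * fst (phi t) + snd (phi t) * snd (phi t) =
      ((1 - t*t) * (1 - t*t) + (2*t) * (2*t)) / ((1 + t*t) * (1 + t*t))"
      by (simp add: phi_def times_divide_times_eq add_divide_distrib)
    ultimately show ?thesis using d by simp
  qed
  have nm1: "fst (phi t) \<noteq> -1" for t
  proof
    assume "fst (phi t) = -1"
    hence "1 - t*t = - (1 + t*t)" using den_nz[of t] by (simp add: phi_def field_simps)
    hence "(2::'a) = 0" by (simp add: algebra_simps)
    thus False using two by simp
  qed
  have inj: "inj phi"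
  proof (rule injI)
    fix t u assume e: "phi t = phi u"
    have dt: "1 + t * t \<noteq> 0" and du: "1 + u * u \<noteq> 0" by (rule den_nz)+
    from e have e1: "(1 - t*t)/(1 + t*t) = (1 - u*u)/(1 + u*u)" and e2: "2*t/(1 + t*t) = 2*u/(1 + u*u)"
      by (simp_all add: phi_def)
    from e1 have "(1 - t*t) * (1 + u*u) = (1 - u*u) * (1 + t*t)" using dt du by (simp add: field_simps)
    hence "2 * (t*t) = 2 * (u*u)" by (simp add: algebra_simps) (metis)
    hence tu: "t*t = u*u" using two by simp
    from e2 have "2*t = 2*u" using dt du unfolding tu by (simp add: field_simps)
    thus "t = u" using two by simp
  qed
  have surj: "p \<in> phi ` UNIV" if p: "p \<in> ?C" "p \<noteq> (-1, 0)" for p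
  proof -
    obtain x y where xy: "p = (x, y)" by (cases p)
    have c: "x * x + y * y = 1" using p xy by simp
    have x1: "1 + x \<noteq> 0"
    proof
      assume "1 + x = 0" hence xm: "x = -1" by (simp add: add_eq_0_iff)
      hence "y * y = 0" using c by simp
      hence "y = 0" by simp
      thus False using p xy xm by simp
    qed
    define t where "t = y / (1 + x)"
    have yy: "y * y = 1 - x * x" using c by (simp add: algebra_simps)
    have den: "1 + t * t = 2 / (1 + x)"
    proof -
      have e: "(1 + x) * (1 + x) + y * y = 2 * (1 + x)" unfolding yy by (simp add: algebra_simps)
      have g: "1 + (y/d)*(y/d) = (d*d + y*y)/(d*d)" if "d \<noteq> 0" for d :: 'a
        using that by (simp add: field_simps)
      have "1 + t * t = ((1 + x) * (1 + x) + y * y) / ((1 + x) * (1 + x))"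
        using g[OF x1] unfolding t_def .
      also have "\<dots> = (2 * (1 + x)) / ((1 + x) * (1 + x))" unfolding e ..
      also have "\<dots> = 2 / (1 + x)" by (rule canc[OF x1])
      finally show ?thesis .
    qed
    have num: "1 - t * t = 2 * x / (1 + x)"
    proof -
      have e: "(1 + x) * (1 + x) - y * y = 2 * x * (1 + x)" unfolding yy by (simp add: algebra_simps)
      have g: "1 - (y/d)*(y/d) = (d*d - y*y)/(d*d)" if "d \<noteq> 0" for d :: 'a
        using that by (simp add: field_simps)
      have "1 - t * t = ((1 + x) * (1 + x) - y * y) / ((1 + x) * (1 + x))"
        using g[OF x1] unfolding t_def .
      also have "\<dots> = (2 * x * (1 + x)) / ((1 + x) * (1 + x))" unfolding e ..
      also have "\<dots> = 2 * x / (1 + x)" by (rule canc[OF x1])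
      finally show ?thesis .
    qed
    have "phi t = (x, y)"
      unfolding phi_def den num using canc2[OF x1 two] by (simp add: t_def)
    thus ?thesis using xy by (metis rangeI)
  qed
  have "?C = insert (-1, 0) (phi ` UNIV)"
  proof (intro equalityI subsetI)
    fix p assume "p \<in> ?C" thus "p \<in> insert (-1, 0) (phi ` UNIV)" using surj by blast
  next
    fix p assume "p \<in> insert (-1, 0) (phi ` UNIV)" thus "p \<in> ?C" using inC by auto
  qed
  moreover have "(-1, 0) \<notin> phi ` UNIV" using nm1 by (metis fst_conv imageE)
  ultimately have "card ?C = card (phi ` UNIV) + 1" by simp
  also have "card (phi ` UNIV) = CARD('a)" using inj by (simp add: card_image)
  finally show ?thesis .
qed


lemma sq_one: "(y::'a) * y = 1 \<Longrightarrow> y = 1 \<or> y = -1"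
proof -
  assume "y * y = 1"
  hence "y \<in> {z. z * z = 1 * 1}" by simp
  thus ?thesis unfolding sq_fiber by simp
qed

lemma chi_2: "chi (2::'a) = -1"
proof (rule ccontr)
  assume ne: "chi (2::'a) \<noteq> -1"
  have two: "(2::'a) \<noteq> 0" by (rule two_nz[OF q8])
  have c2: "chi (2::'a) = 1" using chi_pm[OF two] ne by blast
  have "chi (inverse (2::'a)) * chi 2 = chi (inverse 2 * 2)" by (rule chi_mult[symmetric])
  also have "inverse (2::'a) * 2 = 1" using two by simp
  finally have "chi (inverse (2::'a)) = 1" using c2 chi_1 by simp
  then obtain h :: 'a where h: "h \<noteq> 0" "h * h = inverse 2" using euler_conv by blast
  let ?C = "{p::'a \<times> 'a. fst p * fst p + snd p * snd p = 1}"
  define Dd where "Dd = {p::'a \<times> 'a. fst p * fst p + snd p * snd p = 1 \<and> fst p \<noteq> 0 \<and> snd p \<noteq> 0}"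
  define four where "four = {(1::'a, 0::'a), (-1, 0), (0, 1), (0, -1)}"
  have c4: "card four = 4" unfolding four_def using one_ne_m1 by simp
  have Cu: "?C = Dd \<union> four"
  proof (intro equalityI subsetI)
    fix p assume pC: "p \<in> ?C"
    obtain x y where xy: "p = (x, y)" by (cases p)
    have c: "x * x + y * y = 1" using pC xy by simp
    show "p \<in> Dd \<union> four"
    proof (cases "x = 0 \<or> y = 0")
      case True
      thus ?thesis
      proof
        assume "x = 0" hence "y = 1 \<or> y = -1" using c sq_one by simp
        thus ?thesis using xy \<open>x = 0\<close> unfolding four_def by auto
      next
        assume "y = 0" hence "x = 1 \<or> x = -1" using c sq_one by simp
        thus ?thesis using xy \<open>y = 0\<close> unfolding four_def by auto
      qed
    next
      case False thus ?thesis using c xy unfolding Dd_def by simp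
    qed
  next
    fix p assume "p \<in> Dd \<union> four" thus "p \<in> ?C" unfolding Dd_def four_def by auto
  qed
  have dis: "Dd \<inter> four = {}" unfolding Dd_def four_def by auto
  have "card ?C = card Dd + card four" unfolding Cu
    by (rule card_Un_disjoint) (simp, simp, rule dis)
  hence cD: "CARD('a) + 1 = card Dd + 4" using conic_card c4 by simp
  define U where "U = {u::'a. (\<exists>a. a \<noteq> 0 \<and> a * a = u) \<and> (\<exists>b. b \<noteq> 0 \<and> b * b = 1 - u)}"
  have Du: "Dd = (\<Union>u\<in>U. {x. x * x = u} \<times> {y. y * y = 1 - u})"
  proof (intro equalityI subsetI)
    fix p assume pD: "p \<in> Dd"
    obtain x y where xy: "p = (x, y)" by (cases p)
    have c: "x * x + y * y = 1" "x \<noteq> 0" "y \<noteq> 0" using pD xy unfolding Dd_def by auto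
    have "y * y = 1 - x * x" using c(1) by (simp add: algebra_simps)
    hence "x * x \<in> U" unfolding U_def using c by blast
    thus "p \<in> (\<Union>u\<in>U. {x. x * x = u} \<times> {y. y * y = 1 - u})"
      using xy \<open>y * y = 1 - x * x\<close> by blast
  next
    fix p assume "p \<in> (\<Union>u\<in>U. {x. x * x = u} \<times> {y. y * y = 1 - u})"
    then obtain u where u: "u \<in> U" "fst p * fst p = u" "snd p * snd p = 1 - u" by auto
    obtain a b where ab: "a \<noteq> 0" "a * a = u" "b \<noteq> 0" "b * b = 1 - u" using u(1) unfolding U_def by blast
    have "fst p * fst p \<noteq> 0" "snd p * snd p \<noteq> 0" using u ab by auto
    hence "fst p \<noteq> 0" "snd p \<noteq> 0" by auto
    moreover have "fst p * fst p + snd p * snd p = 1" using u by simp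
    ultimately show "p \<in> Dd" unfolding Dd_def by simp
  qed
  have "card Dd = (\<Sum>u\<in>U. card ({x. x * x = u} \<times> {y. y * y = 1 - u}))"
    unfolding Du
  proof (rule card_UN_disjoint)
    show "finite U" by (rule finite)
    show "\<forall>u\<in>U. finite ({x::'a. x * x = u} \<times> {y. y * y = 1 - u})" by (intro ballI finite)
    show "\<forall>u\<in>U. \<forall>v\<in>U. u \<noteq> v \<longrightarrow> ({x::'a. x * x = u} \<times> {y. y * y = 1 - u}) \<inter>
       ({x. x * x = v} \<times> {y. y * y = 1 - v}) = {}" by blast
  qed
  also have "\<dots> = (\<Sum>u\<in>U. 4)"
  proof (rule sum.cong[OF refl])
    fix u assume "u \<in> U"
    then obtain a b where ab: "a \<noteq> 0" "a * a = u" "b \<noteq> 0" "b * b = 1 - u" unfolding U_def by blast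
    have "card {x. x * x = u} = 2" unfolding ab(2)[symmetric] by (rule sq_fiber_card[OF two ab(1)])
    moreover have "card {y. y * y = 1 - u} = 2" unfolding ab(4)[symmetric] by (rule sq_fiber_card[OF two ab(3)])
    ultimately show "card ({x. x * x = u} \<times> {y. y * y = 1 - u}) = 4" by (simp add: card_cartesian_product)
  qed
  finally have "card Dd = 4 * card U" by simp
  hence evU: "even (card U)" using cD q8 by presburger
  have i2: "inverse (2::'a) \<in> U"
  proof -
    have e: "1 - inverse (2::'a) = inverse 2" using two by (simp add: field_simps)
    have "\<exists>a. a \<noteq> 0 \<and> a * a = inverse (2::'a)" using h by blast
    moreover have "\<exists>b. b \<noteq> 0 \<and> b * b = 1 - inverse (2::'a)" unfolding e using h by blast
    ultimately show ?thesis unfolding U_def by blast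
  qed
  have "even (card (U - {inverse 2}))"
  proof (rule involution_even[where g="\<lambda>u. 1 - u"])
    show "finite (U - {inverse 2})" by (rule finite)
    fix u assume u: "u \<in> U - {inverse (2::'a)}"
    show "1 - (1 - u) = u" by simp
    show "1 - u \<noteq> u"
    proof
      assume "1 - u = u"
      hence "u = inverse 2" using two by (simp add: field_simps)
      thus False using u by simp
    qed
    show "1 - u \<in> U - {inverse 2}"
    proof
      obtain a b where ab: "a \<noteq> 0" "a * a = u" "b \<noteq> 0" "b * b = 1 - u" using u unfolding U_def by blast
      show "1 - u \<in> U" unfolding U_def using ab by auto
      show "1 - u \<notin> {inverse 2}"
      proof
        assume "1 - u \<in> {inverse 2}"
        hence e: "1 - u = inverse 2" by (simp only: singleton_iff)
        have "u = 1 - (1 - u)" by simp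
        also have "\<dots> = 1 - inverse 2" unfolding e ..
        also have "\<dots> = inverse 2" using two by (simp add: field_simps)
        finally show False using u by simp
      qed
    qed
  qed
  moreover have "card U = card (U - {inverse 2}) + 1" using i2
    by (simp add: card_Diff_singleton_if) (metis Suc_pred card_gt_0_iff empty_iff finite)
  ultimately show False using evU by simp
qed
end


context
  fixes dummy :: "'a::{finite,field}"
  assumes q8: "CARD('a) mod 8 = 3"
begin

lemma fs_p: "chi (y::'a) = 1 \<Longrightarrow> fs 3 y = 4 * (y * y)"
  by (simp add: fs_def)
lemma fs_m: "chi (y::'a) = -1 \<Longrightarrow> fs 3 y = 2 * (y * y)"
  by (simp add: fs_def)

lemma chi_4: "chi (4::'a) = 1"
proof -
  have "chi (4::'a) = chi (2 * 2)" by simp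
  also have "\<dots> = 1" using chi_2[OF q8] chi_mult[OF q8, of 2 2] by simp
  finally show ?thesis .
qed

lemma chi_m8: "chi (-8::'a) = 1"
proof -
  have "(-8::'a) = (-1) * (2 * 4)" by simp
  hence "chi (-8::'a) = chi (-1) * (chi 2 * chi 4)" by (simp only: chi_mult[OF q8])
  thus ?thesis using chi_2[OF q8] chi_4 chi_m1[OF q8] by simp
qed

lemma chi_sq01: "chi ((y::'a) * y) = 0 \<or> chi (y * y) = 1"
  using chi_square[OF q8, of y] chi_0[OF q8] by (cases "y = 0") auto

lemma L1:
  assumes t0: "fs 3 (t0 + 1) - fs 3 t0 = c" "chi (t0 + 1) = 1" "chi t0 = (1::'a)"
    and t: "fs 3 (t + 1) - fs 3 t = c" "chi (t + 1) = -1" "chi t = (1::'a)"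
  shows False
proof -
  have "c = 8 * t0 + 4" using t0 by (simp add: fs_p algebra_simps)
  hence e1: "4 - c = (-8) * t0" by (simp add: algebra_simps)
  have "c = 2 * ((t+1)*(t+1)) - 4 * (t * t)" using t by (simp add: fs_p fs_m)
  hence e2: "4 - c = 2 * ((t - 1) * (t - 1))" by (simp add: algebra_simps)
  have "chi (4 - c) = 1" unfolding e1 chi_mult[OF q8] chi_m8 t0(3) by simp
  moreover have "chi (4 - c) = -1 * chi ((t - 1) * (t - 1))" unfolding e2 chi_mult[OF q8] chi_2[OF q8] ..
  ultimately show False using chi_sq01[of "t - 1"] one_ne_m1[OF q8] by auto
qed

lemma L2:
  assumes t1: "fs 3 (t1 + 1) - fs 3 t1 = c" "chi (t1 + 1) = 1" "chi t1 = (-1::'a)"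
    and t2: "fs 3 (t2 + 1) - fs 3 t2 = c" "chi (t2 + 1) = 1" "chi t2 = (-1::'a)"
    and ne: "t1 \<noteq> t2"
    and u: "fs 3 (u + 1) - fs 3 u = c" "chi (u + 1) = -1" "chi u = (-1::'a)"
  shows False
proof -
  have c1: "c = 4 * ((t1+1)*(t1+1)) - 2 * (t1 * t1)" using t1 by (simp add: fs_p fs_m)
  have c2: "c = 4 * ((t2+1)*(t2+1)) - 2 * (t2 * t2)" using t2 by (simp add: fs_p fs_m)
  have "(t1 - t2) * (2 * (t1 + t2) + 8) = 0" using c1 c2 by (simp add: algebra_simps)
  hence "2 * (t1 + t2) + 8 = 0" using ne by simp
  hence "2 * (t1 + t2 + 4) = 0" by (simp add: algebra_simps)
  hence h0: "t1 + t2 + 4 = 0" using two_nz[OF q8] by (simp only: mult_eq_0_iff) simp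
  have "t2 = (t1 + t2 + 4) - 4 - t1" by (simp add: algebra_simps)
  hence s: "t2 = -4 - t1" unfolding h0 by simp
  have e1: "-2 - c = 2 * ((t1 + 1) * (t2 + 1))" unfolding s c1 by (simp add: algebra_simps)
  have cu: "c = 2 * ((u+1)*(u+1)) - 2 * (u * u)" using u by (simp add: fs_m)
  have e2: "-2 - c = (-1) * (4 * (u + 1))" unfolding cu by (simp add: algebra_simps)
  have "chi (-2 - c) = -1" unfolding e1 chi_mult[OF q8] chi_2[OF q8] t1(2) t2(2) by simp
  moreover have "chi (-2 - c) = 1" unfolding e2 chi_mult[OF q8] chi_m1[OF q8] chi_4 u(2) by simp
  ultimately show False using one_ne_m1[OF q8] by simp
qed


lemma eight_nz: "(8::'a) \<noteq> 0"
proof -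
  have "(2::'a) * 2 * 2 \<noteq> 0" using two_nz[OF q8] by (simp only: mult_eq_0_iff) blast
  thus ?thesis by simp
qed

lemma four_nz: "(4::'a) \<noteq> 0"
proof -
  have "(2::'a) * 2 \<noteq> 0" using two_nz[OF q8] by (simp only: mult_eq_0_iff) blast
  thus ?thesis by simp
qed

lemma card2_ex: "card (S::'b set) \<ge> 2 \<Longrightarrow> \<exists>x\<in>S. \<exists>y\<in>S. x \<noteq> y"
  by (metis One_nat_def card.infinite card_le_Suc0_iff_eq not_less_eq_eq numeral_2_eq_2 zero_le)

lemma core: "card {t::'a. fs 3 (t + 1) - fs 3 t = c} \<le> 4"
proof -
  define T where "T = {t::'a. fs 3 (t + 1) - fs 3 t = c}"
  define T1 where "T1 = {t\<in>T. chi (t + 1) = 1 \<and> chi t = 1}"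
  define T2 where "T2 = {t\<in>T. chi (t + 1) = -1 \<and> chi t = -1}"
  define T3 where "T3 = {t\<in>T. chi (t + 1) = 1 \<and> chi t = -1}"
  define T4 where "T4 = {t\<in>T. chi (t + 1) = -1 \<and> chi t = 1}"
  define Z where "Z = {t\<in>T. t = 0 \<or> t = -1}"
  have two: "(2::'a) \<noteq> 0" by (rule two_nz[OF q8])
  have c00: "chi (0::'a) \<noteq> 1" "chi (0::'a) \<noteq> -1" using chi_0[OF q8] by simp_all
  have cov: "T \<subseteq> T1 \<union> T2 \<union> T3 \<union> T4 \<union> Z"
  proof
    fix t assume t: "t \<in> T"
    show "t \<in> T1 \<union> T2 \<union> T3 \<union> T4 \<union> Z"
    proof (cases "t = 0 \<or> t = -1")
      case True thus ?thesis using t unfolding Z_def by blast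
    next
      case False
      hence "t \<noteq> 0" "t + 1 \<noteq> 0" by (auto simp: eq_neg_iff_add_eq_0)
      hence "chi t = 1 \<or> chi t = -1" "chi (t + 1) = 1 \<or> chi (t + 1) = -1" using chi_pm[OF q8] by blast+
      thus ?thesis using t unfolding T1_def T2_def T3_def T4_def by blast
    qed
  qed
  have "card T \<le> card (T1 \<union> T2 \<union> T3 \<union> T4 \<union> Z)" by (rule card_mono[OF finite cov])
  also have "\<dots> \<le> card T1 + card T2 + card T3 + card T4 + card Z"
    by (meson add_le_mono card_Un_le le_refl order_trans)
  finally have tot: "card T \<le> card T1 + card T2 + card T3 + card T4 + card Z" .
  have cT1: "card T1 \<le> 1"
  proof -
    have "t = u" if "t \<in> T1" "u \<in> T1" for t u
    proof -
      have "c = 8 * t + 4" "c = 8 * u + 4" using that unfolding T1_def T_def by (auto simp: fs_p algebra_simps)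
      hence "8 * t = 8 * u" by simp (metis)
      thus "t = u" using eight_nz by simp
    qed
    thus ?thesis by (simp add: card_le_Suc0_iff_eq)
  qed
  have cT2: "card T2 \<le> 1"
  proof -
    have "t = u" if "t \<in> T2" "u \<in> T2" for t u
    proof -
      have "c = 4 * t + 2" "c = 4 * u + 2" using that unfolding T2_def T_def by (auto simp: fs_m algebra_simps)
      hence "4 * t = 4 * u" by simp (metis)
      thus "t = u" using four_nz by simp
    qed
    thus ?thesis by (simp add: card_le_Suc0_iff_eq)
  qed
  have cT3: "card T3 \<le> 2"
  proof -
    have "T3 \<subseteq> {t. (t + 2) * (t + 2) = (c + 4) / 2}"
    proof
      fix t assume "t \<in> T3"
      hence "c = 4 * ((t+1)*(t+1)) - 2 * (t * t)" unfolding T3_def T_def by (auto simp: fs_p fs_m)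
      hence "c + 4 = 2 * ((t + 2) * (t + 2))" by (simp add: algebra_simps)
      thus "t \<in> {t. (t + 2) * (t + 2) = (c + 4) / 2}" using two by simp
    qed
    thus ?thesis using card_sq_shift[of 2 "(c + 4) / 2"] card_mono[OF finite] order_trans by blast
  qed
  have cT4: "card T4 \<le> 2"
  proof -
    have "T4 \<subseteq> {t. (t + -1) * (t + -1) = (4 - c) / 2}"
    proof
      fix t assume "t \<in> T4"
      hence "c = 2 * ((t+1)*(t+1)) - 4 * (t * t)" unfolding T4_def T_def by (auto simp: fs_p fs_m)
      hence "4 - c = 2 * ((t + -1) * (t + -1))" by (simp add: algebra_simps)
      thus "t \<in> {t. (t + -1) * (t + -1) = (4 - c) / 2}" using two by simp
    qed
    thus ?thesis using card_sq_shift[of "-1" "(4 - c) / 2"] card_mono[OF finite] order_trans by blast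
  qed
  have cZ: "card Z \<le> (if (0::'a) \<in> T then 1 else 0) + (if (-1::'a) \<in> T then 1 else 0)"
  proof -
    have "Z \<subseteq> ({0} \<inter> T) \<union> ({-1} \<inter> T)" unfolding Z_def by auto
    hence "card Z \<le> card ({0} \<inter> T) + card ({-1} \<inter> T)"
      by (meson card_Un_le card_mono finite order_trans)
    moreover have "card ({0} \<inter> T) = (if (0::'a) \<in> T then 1 else 0)" by auto
    moreover have "card ({-1} \<inter> T) = (if (-1::'a) \<in> T then 1 else 0)" by auto
    ultimately show ?thesis by simp
  qed
  have l1: "card T1 = 0 \<or> card T4 = 0"
  proof (rule ccontr)
    assume "\<not> (card T1 = 0 \<or> card T4 = 0)"
    then obtain t0 t where "t0 \<in> T1" "t \<in> T4" by (metis card.empty ex_in_conv)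
    thus False using L1[of t0 c t] unfolding T1_def T4_def T_def by auto
  qed
  have l2: "card T3 \<le> 1 \<or> card T2 = 0"
  proof (rule ccontr)
    assume "\<not> (card T3 \<le> 1 \<or> card T2 = 0)"
    hence "card T3 \<ge> 2" "card T2 \<noteq> 0" by auto
    then obtain t1 t2 u where "t1 \<in> T3" "t2 \<in> T3" "t1 \<noteq> t2" "u \<in> T2"
      using card2_ex by (metis card.empty ex_in_conv)
    thus False using L2[of t1 c t2 u] unfolding T3_def T2_def T_def by auto
  qed
  have z0: "card T1 = 0 \<and> card T3 \<le> 1 \<and> card T4 \<le> 1" if "(0::'a) \<in> T"
  proof -
    have "c = fs 3 1 - fs 3 0" using that unfolding T_def by simp
    hence c4: "c = 4" using chi_1[OF q8] by (simp add: fs_p fs_def)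
    have "T1 = {}"
    proof -
      have False if "t \<in> T1" for t
      proof -
        have "c = 8 * t + 4" "chi t = 1" using that unfolding T1_def T_def by (auto simp: fs_p algebra_simps)
        hence "8 * t = 0" using c4 by simp
        hence "t = 0" using eight_nz by simp
        thus False using \<open>chi t = 1\<close> c00 by simp
      qed
      thus ?thesis by blast
    qed
    moreover have "T3 \<subseteq> {-4}"
    proof
      fix t assume t: "t \<in> T3"
      hence "c = 4 * ((t+1)*(t+1)) - 2 * (t * t)" "chi t = -1" unfolding T3_def T_def by (auto simp: fs_p fs_m)
      hence "2 * (t * (t + 4)) = 0" using c4 by (simp add: algebra_simps)
      hence "t = 0 \<or> t + 4 = 0" using two by simp
      moreover have "t \<noteq> 0" using \<open>chi t = -1\<close> c00 by auto
      ultimately have "t + 4 = 0" by simp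
      thus "t \<in> {-4}" by (simp add: eq_neg_iff_add_eq_0)
    qed
    moreover have "T4 \<subseteq> {1}"
    proof
      fix t assume t: "t \<in> T4"
      hence "c = 2 * ((t+1)*(t+1)) - 4 * (t * t)" unfolding T4_def T_def by (auto simp: fs_p fs_m)
      hence "2 * ((t - 1) * (t - 1)) = 0" using c4 by (simp add: algebra_simps)
      hence "t - 1 = 0" using two by simp
      thus "t \<in> {1}" by simp
    qed
    ultimately show ?thesis by (simp add: card_mono subset_singletonD card_le_Suc0_iff_eq) (metis card_le_Suc0_iff_eq finite singletonD subset_iff)
  qed
  have zm1: "card T2 = 0 \<and> card T3 \<le> 1" if "(-1::'a) \<in> T"
  proof -
    have "c = fs 3 0 - fs 3 (-1)" using that unfolding T_def by simp
    hence cm2: "c = -2" using chi_m1[OF q8] by (simp add: fs_m fs_def)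
    have "T2 = {}"
    proof -
      have False if "t \<in> T2" for t
      proof -
        have "c = 4 * t + 2" "chi (t + 1) = -1" using that unfolding T2_def T_def by (auto simp: fs_m algebra_simps)
        hence "4 * (t + 1) = 0" using cm2 by (simp add: algebra_simps)
        hence "t + 1 = 0" using four_nz mult_eq_0_iff[of "4::'a" "t + 1"] by blast
        thus False using \<open>chi (t + 1) = -1\<close> c00 by simp
      qed
      thus ?thesis by blast
    qed
    moreover have "T3 \<subseteq> {-3}"
    proof
      fix t assume t: "t \<in> T3"
      hence "c = 4 * ((t+1)*(t+1)) - 2 * (t * t)" "chi (t + 1) = 1" unfolding T3_def T_def by (auto simp: fs_p fs_m)
      hence "2 * ((t + 1) * (t + 3)) = 0" using cm2 by (simp add: algebra_simps)
      hence "t + 1 = 0 \<or> t + 3 = 0" using two by simp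
      moreover have "t + 1 \<noteq> 0" using \<open>chi (t + 1) = 1\<close> c00 by auto
      ultimately have "t + 3 = 0" by simp
      thus "t \<in> {-3}" by (simp add: eq_neg_iff_add_eq_0)
    qed
    ultimately show ?thesis by simp (metis card_le_Suc0_iff_eq finite singletonD subset_iff)
  qed
  have "card T \<le> 4"
  proof (cases "(0::'a) \<in> T")
    case True
    note a = z0[OF True]
    show ?thesis
    proof (cases "(-1::'a) \<in> T")
      case True2: True
      thus ?thesis using tot a zm1[OF True2] cZ True by simp
    next
      case False
      thus ?thesis using tot a cT2 cZ True by simp
    qed
  next
    case False
    show ?thesis
    proof (cases "(-1::'a) \<in> T")
      case True2: True
      thus ?thesis using tot zm1[OF True2] cZ False l1 cT1 cT4 by auto
    next
      case False2: False
      thus ?thesis using tot cZ False l1 l2 cT1 cT2 cT3 cT4 by auto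
    qed
  qed
  thus ?thesis unfolding T_def .
qed
end

context
  fixes dummy :: "'a::{finite,field}"
  assumes q8: "CARD('a) mod 8 = 3"
begin

lemma chi_neg: "chi (-(y::'a)) = - chi y"
proof -
  have "chi (-y) = chi ((-1) * y)" by simp
  also have "\<dots> = - chi y" unfolding chi_mult[OF q8] chi_m1[OF q8] by simp
  finally show ?thesis .
qed

lemma fs_neg: "fs s (-(y::'a)) = - fs (-s) y"
  unfolding fs_def chi_neg by (simp add: algebra_simps)

lemma N_sym: "card {x::'a. fs s (x + a) - fs s x = c} = card {x. fs (-s) (x + a) - fs (-s) x = c}"
proof -
  have key: "fs s ((-y - a) + a) - fs s (-y - a) = fs (-s) (y + a) - fs (-s) y" for y
  proof -
    have "fs s ((-y - a) + a) = - fs (-s) y" using fs_neg[of s y] by simp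
    moreover have "fs s (-y - a) = - fs (-s) (y + a)"
    proof -
      have e: "-y - a = -(y + a)" by simp
      show ?thesis unfolding e by (rule fs_neg)
    qed
    ultimately show ?thesis by simp
  qed
  have se: "{x::'a. fs s (x + a) - fs s x = c} = (\<lambda>y. -y - a) ` {x. fs (-s) (x + a) - fs (-s) x = c}"
  proof (intro equalityI subsetI)
    fix x assume x: "x \<in> {x::'a. fs s (x + a) - fs s x = c}"
    have "x = - (-x - a) - a" by simp
    moreover have "-x - a \<in> {x. fs (-s) (x + a) - fs (-s) x = c}" using x key[of "-x - a"] by simp
    ultimately show "x \<in> (\<lambda>y. -y - a) ` {x. fs (-s) (x + a) - fs (-s) x = c}" by blast
  next
    fix x assume "x \<in> (\<lambda>y. -y - a) ` {x. fs (-s) (x + a) - fs (-s) x = c}"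
    then obtain y where "x = -y - a" "fs (-s) (y + a) - fs (-s) y = c" by blast
    thus "x \<in> {x::'a. fs s (x + a) - fs s x = c}" using key[of y] by simp
  qed
  have ij: "inj (\<lambda>y::'a. -y - a)" by (rule injI) simp
  show ?thesis unfolding se by (rule card_image[OF inj_on_subset[OF ij subset_UNIV]])
qed

lemma N_scale1:
  assumes a: "(a::'a) \<noteq> 0" "chi a = 1"
  shows "card {x. fs s (x + a) - fs s x = c} = card {w. fs s (w + 1) - fs s w = c / (a * a)}"
proof -
  have fsa: "fs s (a * t) = a * a * fs s t" for t
    unfolding fs_def chi_mult[OF q8] a(2) by (simp add: algebra_simps)
  have key: "fs s (a * w + a) - fs s (a * w) = a * a * (fs s (w + 1) - fs s w)" for w
    using fsa[of "w + 1"] fsa[of w] by (simp add: algebra_simps)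
  have aa: "a * a \<noteq> 0" using a by simp
  have se: "{x. fs s (x + a) - fs s x = c} = (\<lambda>w. a * w) ` {w. fs s (w + 1) - fs s w = c / (a * a)}"
  proof (intro equalityI subsetI)
    fix x assume x: "x \<in> {x. fs s (x + a) - fs s x = c}"
    have xe: "x = a * (x / a)" using a by simp
    have "a * a * (fs s (x / a + 1) - fs s (x / a)) = c" using x key[of "x / a"] xe by simp
    hence "fs s (x / a + 1) - fs s (x / a) = c / (a * a)" using aa by (simp add: field_simps)
    thus "x \<in> (\<lambda>w. a * w) ` {w. fs s (w + 1) - fs s w = c / (a * a)}" using xe by blast
  next
    fix x assume "x \<in> (\<lambda>w. a * w) ` {w. fs s (w + 1) - fs s w = c / (a * a)}"
    then obtain w where w: "x = a * w" "fs s (w + 1) - fs s w = c / (a * a)" by blast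
    thus "x \<in> {x. fs s (x + a) - fs s x = c}" using key[of w] aa by simp
  qed
  have ij: "inj (\<lambda>w. a * w)" using a by (intro injI) simp
  show ?thesis unfolding se by (rule card_image[OF inj_on_subset[OF ij subset_UNIV]])
qed

lemma N_scale2:
  assumes a: "(a::'a) \<noteq> 0" "chi a = -1"
  shows "card {x. fs s (x + a) - fs s x = c} = card {w. fs s (w + 1) - fs s w = - c / (a * a)}"
proof -
  have fsa: "fs s (a * t) = a * a * fs s (-t)" for t
    unfolding fs_def chi_mult[OF q8] a(2) chi_neg by (simp add: algebra_simps)
  have key: "fs s ((-a * w - a) + a) - fs s (-a * w - a) = - (a * a) * (fs s (w + 1) - fs s w)" for w
  proof -
    have "fs s ((-a * w - a) + a) = a * a * fs s w" using fsa[of "-w"] by simp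
    moreover have "fs s (-a * w - a) = a * a * fs s (w + 1)" using fsa[of "-w - 1"] by (simp add: algebra_simps)
    ultimately show ?thesis by (simp add: algebra_simps)
  qed
  have aa: "a * a \<noteq> 0" using a by simp
  have se: "{x. fs s (x + a) - fs s x = c} = (\<lambda>w. -a * w - a) ` {w. fs s (w + 1) - fs s w = - c / (a * a)}"
  proof (intro equalityI subsetI)
    fix x assume x: "x \<in> {x. fs s (x + a) - fs s x = c}"
    define w where "w = - x / a - 1"
    have xe: "x = -a * w - a" using a unfolding w_def by (simp add: field_simps)
    have "- (a * a) * (fs s (w + 1) - fs s w) = c" using x key[of w] xe by simp
    hence "fs s (w + 1) - fs s w = - c / (a * a)" using aa by (simp add: field_simps)
    thus "x \<in> (\<lambda>w. -a * w - a) ` {w. fs s (w + 1) - fs s w = - c / (a * a)}" using xe by blast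
  next
    fix x assume "x \<in> (\<lambda>w. -a * w - a) ` {w. fs s (w + 1) - fs s w = - c / (a * a)}"
    then obtain w where w: "x = -a * w - a" "fs s (w + 1) - fs s w = - c / (a * a)" by blast
    thus "x \<in> {x. fs s (x + a) - fs s x = c}" using key[of w] aa by simp
  qed
  have ij: "inj (\<lambda>w. -a * w - a)" using a by (intro injI) simp
  show ?thesis unfolding se by (rule card_image[OF inj_on_subset[OF ij subset_UNIV]])
qed

lemma N_le4:
  assumes s: "s = 3 \<or> s = (-3::'a)" and a: "a \<noteq> 0"
  shows "card {x. fs s (x + a) - fs s x = c} \<le> 4"
proof -
  have one: "card {w. fs s (w + 1) - fs s w = c'} \<le> 4" for c'
    using s
  proof
    assume h: "s = 3" show ?thesis unfolding h by (rule core[OF q8])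
  next
    assume h: "s = -3"
    have ms: "-s = 3" using h by simp
    have "card {w. fs s (w + 1) - fs s w = c'} = card {w. fs (-s) (w + 1) - fs (-s) w = c'}"
      by (rule N_sym)
    also have "\<dots> \<le> 4" unfolding ms by (rule core[OF q8])
    finally show ?thesis .
  qed
  show ?thesis using chi_pm[OF q8 a]
  proof
    assume "chi a = 1"
    thus ?thesis using N_scale1[OF a(1), of s c] one[of "c / (a * a)"] by simp
  next
    assume "chi a = -1"
    thus ?thesis using N_scale2[OF a(1), of s c] one[of "- c / (a * a)"] by simp
  qed
qed

lemma fs_inj:
  assumes s: "s = 3 \<or> s = (-3::'a)"
  shows "inj (fs s)"
proof -
  have two: "(2::'a) \<noteq> 0" by (rule two_nz[OF q8])
  have cA: "chi (1 + s) = 1" and cB: "chi (-1 + s) = -1"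
  proof -
    have "chi (1 + s) = 1 \<and> chi (-1 + s) = -1" using s
    proof
      assume h: "s = 3"
      have e1: "1 + s = 4" using h by simp
      have e2: "-1 + s = 2" using h by simp
      show ?thesis unfolding e1 e2 chi_4[OF q8] chi_2[OF q8] by simp
    next
      assume h: "s = -3"
      have e1: "1 + s = (-1) * 2" using h by simp
      have e2: "-1 + s = (-1) * 4" using h by simp
      show ?thesis unfolding e1 e2 chi_mult[OF q8] chi_4[OF q8] chi_2[OF q8] chi_m1[OF q8] by simp
    qed
    thus "chi (1 + s) = 1" "chi (-1 + s) = -1" by simp_all
  qed
  have nz: "chi y + s \<noteq> 0" if "y \<noteq> 0" for y :: 'a
  proof -
    have "chi y = 1 \<or> chi y = -1" by (rule chi_pm[OF q8 that])
    thus ?thesis using cA cB chi_0[OF q8] by auto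
  qed
  have cf: "chi (fs s y) = chi y" for y
  proof (cases "y = 0")
    case True thus ?thesis by (simp add: fs_def chi_0[OF q8])
  next
    case False
    have "chi (fs s y) = chi (y * y) * chi (chi y + s)" unfolding fs_def chi_mult[OF q8] ..
    also have "\<dots> = chi (chi y + s)" using chi_square[OF q8 False] by simp
    also have "\<dots> = chi y" using chi_pm[OF q8 False] cA cB by auto
    finally show ?thesis .
  qed
  show ?thesis
  proof (rule injI)
    fix x y assume e: "fs s x = fs s y"
    hence ce: "chi x = chi y" using cf by metis
    show "x = y"
    proof (cases "x = 0")
      case True
      hence "chi y = 0" using ce chi_0[OF q8] by simp
      hence "y = 0" using chi_pm[OF q8, of y] one_ne_m1[OF q8] by auto
      thus ?thesis using True by simp
    next
      case False
      hence yn: "y \<noteq> 0" using ce chi_0[OF q8] chi_pm[OF q8 False] by auto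
      have "x * x * (chi x + s) = y * y * (chi x + s)" using e ce unfolding fs_def by simp
      hence "x * x = y * y" using nz[OF False] by simp
      hence "x \<in> {z. z * z = y * y}" by simp
      hence "x = y \<or> x = -y" unfolding sq_fiber by simp
      thus ?thesis
      proof
        assume "x = -y"
        hence "chi x = - chi x" using ce chi_neg by simp
        thus ?thesis using chi_pm[OF q8 False] one_ne_m1[OF q8] by auto
      qed
    qed
  qed
qed

end

theorem corollary1p3:
  fixes s :: "'a::{finite,field}"
  assumes "CARD('a) mod 8 = 3"
    and "s = 3 \<or> s = -3"
  defines "f \<equiv> [:0, 0, 1:] * (monom 1 ((CARD('a) - 1) div 2) + [:s:])"
  shows "permutation_poly f \<and> diff_uniformity f \<le> 4"
proof -
  note q8 = assms(1) and s = assms(2)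
  have pf: "poly f = fs s"
  proof
    fix x :: 'a
    show "poly f x = fs s x" unfolding f_def fs_def chi_def by (simp add: poly_monom)
  qed
  have ij: "inj (fs s)" by (rule fs_inj[OF q8 s])
  have perm: "permutation_poly f"
    unfolding permutation_poly_def pf bij_def using ij finite_UNIV_inj_surj[OF finite ij] by simp
  define K where "K = {card {x. poly f (x + a) - poly f x = c} | a c. a \<noteq> (0::'a)}"
  have finK: "finite K"
  proof -
    have "K \<subseteq> (\<lambda>(a, c). card {x. poly f (x + a) - poly f x = c}) ` (UNIV :: ('a \<times> 'a) set)"
      unfolding K_def by auto
    thus ?thesis by (rule finite_subset) simp
  qed
  have "card {x. poly f (x + 1) - poly f x = 0} \<in> K" unfolding K_def
    by (rule CollectI, rule exI[where x=1], rule exI[where x=0]) simp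
  hence neK: "K \<noteq> {}" by blast
  have bnd: "\<forall>k\<in>K. k \<le> 4"
  proof
    fix k assume "k \<in> K"
    then obtain a c where ac: "k = card {x. poly f (x + a) - poly f x = c}" "a \<noteq> 0" unfolding K_def by blast
    show "k \<le> 4" unfolding ac(1) pf by (rule N_le4[OF q8 s ac(2)])
  qed
  have "diff_uniformity f \<le> 4"
    unfolding diff_uniformity_def K_def[symmetric] using finK neK bnd by (simp add: Max.boundedI)
  with perm show ?thesis by simp
qed

end
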